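(* Let $\mathcal B$ be a BMC with $\mathbf c^*_q<\infty$ for all $q\in\mathcal T$, and consider the Q-learning process with learning rates $\lambda_i\in[0,1]$ satisfying $\sum_{i=0}^\infty\lambda_i=\infty$, a fixed selection distribution with $p_q\ge p_{\min}>0$ for all $q$, and initial value $Q_0=\kappa\mathbf c^*$ for a scalar $\kappa\ge0$. Then $\lim_{i\to\infty}\mathbb E Q_i=\mathbf c^*$.
   Context: A branching Markov chain (BMC) is $\mathcal B=(\mathcal T,p,c)$ with $\mathcal T$ a finite set of types, $p(q)$ for each $q\in\mathcal T$ a probability distribution with finite support over finite lists $\mathcal T^*$ of types (the offspring distribution), and $c:\mathcal T\to\mathbb R_{>0}$ a strictly positive cost. For a list $\alpha$, $|\alpha|$ is its length and $\alpha_i$ its $i$-th element. $\mathbf c^*_q\in[0,\infty]$ denotes the expected total cost until extinction starting from the single entity $q$; equivalently $\mathbf c^*$ is the least fixed point in $[0,\infty]^{\mathcal T}$ of $F(\mathbf x)_q=c(q)+\sum_\alpha p(q)(\alpha)\sum_{i=1}^{|\alpha|}\mathbf x_{\alpha_i}$. Q-learning process for a BMC: given deterministic learning rates $\lambda_i\in[0,1]$, a probability distribution $(p_q)_{q\in\mathcal T}$ and an initial vector $Q_0\in\mathbb R_{\ge0}^{\mathcal T}$, at each step $i=0,1,2,\dots$ a type $q_i$ is selected with probability $p_{q_i}$ independently of all previous randomness, then a list $\beta^i$ is drawn from $p(q_i)$ independently, and $Q_{i+1}(q_i)=(1-\lambda_i)Q_i(q_i)+\lambda_i\big(c(q_i)+\sum_{j=1}^{|\beta^i|}Q_i(\beta^i_j)\big)$,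 while $Q_{i+1}(q)=Q_i(q)$ for $q\ne q_i$. $\mathbb E Q_i$ is the componentwise expectation. *)

theory Defs
  imports "HOL-Probability.Probability"
begin

text \<open>A branching Markov chain: types are a finite type 'q; offspring distribution
  p q :: 'q list pmf (finite support); cost c q > 0.\<close>

definition is_BMC :: "('q::finite \<Rightarrow> 'q list pmf) \<Rightarrow> ('q \<Rightarrow> real) \<Rightarrow> bool" where
  "is_BMC p c \<longleftrightarrow> (\<forall>q. finite (set_pmf (p q))) \<and> (\<forall>q. c q > 0)"

definition bmc_F :: "('q \<Rightarrow> 'q list pmf) \<Rightarrow> ('q \<Rightarrow> real) \<Rightarrow> ('q \<Rightarrow> ennreal) \<Rightarrow> ('q \<Rightarrow> ennreal)" where
  "bmc_F p c x = (\<lambda>q. ennreal (c q) +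
      (\<Sum>\<alpha>\<in>set_pmf (p q). ennreal (pmf (p q) \<alpha>) * (\<Sum>i<length \<alpha>. x (\<alpha> ! i))))"

text \<open>Expected total cost until extinction: least fixed point of F.\<close>
definition cstar :: "('q \<Rightarrow> 'q list pmf) \<Rightarrow> ('q \<Rightarrow> real) \<Rightarrow> ('q \<Rightarrow> ennreal)" where
  "cstar p c = lfp (bmc_F p c)"

text \<open>Law of Q_i in the Q-learning process (selection distribution sel, learning rates lr,
  initial vector Q0).  Q_i is a random vector; Qlaw gives its distribution.\<close>
primrec Qlaw :: "('q \<Rightarrow> 'q list pmf) \<Rightarrow> ('q \<Rightarrow> real) \<Rightarrow> (nat \<Rightarrow> real) \<Rightarrow> 'q pmf
                  \<Rightarrow> ('q \<Rightarrow> real) \<Rightarrow> nat \<Rightarrow> ('q \<Rightarrow> real) pmf" where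
  "Qlaw p c lr sel Q0 0 = return_pmf Q0"
| "Qlaw p c lr sel Q0 (Suc i) =
     do { Q \<leftarrow> Qlaw p c lr sel Q0 i;
          q \<leftarrow> sel;
          \<beta> \<leftarrow> p q;
          return_pmf (Q(q := (1 - lr i) * Q q + lr i * (c q + (\<Sum>j<length \<beta>. Q (\<beta> ! j)))))
        }"

definition EQ :: "('q \<Rightarrow> 'q list pmf) \<Rightarrow> ('q \<Rightarrow> real) \<Rightarrow> (nat \<Rightarrow> real) \<Rightarrow> 'q pmf
                  \<Rightarrow> ('q \<Rightarrow> real) \<Rightarrow> nat \<Rightarrow> 'q \<Rightarrow> real" where
  "EQ p c lr sel Q0 i q = measure_pmf.expectation (Qlaw p c lr sel Q0 i) (\<lambda>Q. Q q)"

end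

theory Submission
  imports Defs
begin


definition Mop :: "('q \<Rightarrow> 'q list pmf) \<Rightarrow> 'q \<Rightarrow> ('q \<Rightarrow> real) \<Rightarrow> real" where
  "Mop p q x = (\<Sum>\<alpha>\<in>set_pmf (p q). pmf (p q) \<alpha> * (\<Sum>j<length \<alpha>. x (\<alpha> ! j)))"

lemma fin_Qlaw:
  fixes p :: "'q::finite \<Rightarrow> 'q list pmf"
  assumes "\<And>q. finite (set_pmf (p q))"
  shows "finite (set_pmf (Qlaw p c lr sel Q0 i))"
  by (induction i) (auto simp: set_bind_pmf assms intro!: finite_UN_I)

lemma inner:
  fixes p :: "'q::finite \<Rightarrow> 'q list pmf"
  assumes fin: "\<And>q. finite (set_pmf (p q))"
  shows "measure_pmf.expectation (sel \<bind> (\<lambda>q0. p q0 \<bind> (\<lambda>\<beta>. return_pmf (Q(q0 := (1 - a) * Q q0 + a * (c q0 + (\<Sum>j<length \<beta>. Q (\<beta> ! j)))))))) (\<lambda>Q'. Q' q)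
     = Q q + pmf sel q * a * (c q + Mop p q Q - Q q)"
proof -
  define V where "V = (1 - a) * Q q + a * (c q + Mop p q Q)"
  have e1: "measure_pmf.expectation (p q0 \<bind> (\<lambda>\<beta>. return_pmf (Q(q0 := (1 - a) * Q q0 + a * (c q0 + (\<Sum>j<length \<beta>. Q (\<beta> ! j))))))) (\<lambda>Q'. Q' q)
      = (if q0 = q then V else Q q)" for q0
  proof -
    have "measure_pmf.expectation (p q0 \<bind> (\<lambda>\<beta>. return_pmf (Q(q0 := (1 - a) * Q q0 + a * (c q0 + (\<Sum>j<length \<beta>. Q (\<beta> ! j))))))) (\<lambda>Q'. Q' q)
       = (\<Sum>\<beta>\<in>set_pmf (p q0). pmf (p q0) \<beta> * (if q0 = q then (1 - a) * Q q0 + a * (c q0 + (\<Sum>j<length \<beta>. Q (\<beta> ! j))) else Q q))"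
      by (subst pmf_expectation_bind[of "set_pmf (p q0)"]) (auto simp: fin eq_commute intro!: sum.cong)
    also have "\<dots> = (if q0 = q then V else Q q)"
    proof (cases "q0 = q")
      case True
      have "(\<Sum>\<beta>\<in>set_pmf (p q). pmf (p q) \<beta> * ((1 - a) * Q q + a * (c q + (\<Sum>j<length \<beta>. Q (\<beta> ! j)))))
          = (\<Sum>\<beta>\<in>set_pmf (p q). pmf (p q) \<beta>) * ((1 - a) * Q q + a * c q) + a * Mop p q Q"
      proof -
        have "(\<Sum>\<beta>\<in>set_pmf (p q). pmf (p q) \<beta> * ((1 - a) * Q q + a * (c q + (\<Sum>j<length \<beta>. Q (\<beta> ! j)))))
          = (\<Sum>\<beta>\<in>set_pmf (p q). pmf (p q) \<beta> * ((1 - a) * Q q + a * c q) + a * (pmf (p q) \<beta> * (\<Sum>j<length \<beta>. Q (\<beta> ! j))))"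
          by (intro sum.cong) (auto simp: algebra_simps)
        also have "\<dots> = (\<Sum>\<beta>\<in>set_pmf (p q). pmf (p q) \<beta>) * ((1 - a) * Q q + a * c q) + a * Mop p q Q"
          by (simp only: sum.distrib sum_distrib_right[symmetric] sum_distrib_left[symmetric] Mop_def)
        finally show ?thesis .
      qed
      also have "\<dots> = V" using sum_pmf_eq_1[OF fin, of "p q"] by (simp add: V_def algebra_simps)
      finally show ?thesis using True by simp
    next
      case False
      then show ?thesis using sum_pmf_eq_1[OF fin, of "p q0"] by (simp add: sum_distrib_right[symmetric])
    qed
    finally show ?thesis .
  qed
  have "measure_pmf.expectation (sel \<bind> (\<lambda>q0. p q0 \<bind> (\<lambda>\<beta>. return_pmf (Q(q0 := (1 - a) * Q q0 + a * (c q0 + (\<Sum>j<length \<beta>. Q (\<beta> ! j)))))))) (\<lambda>Q'. Q' q)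
     = (\<Sum>q0\<in>UNIV. pmf sel q0 * (if q0 = q then V else Q q))"
    by (subst pmf_expectation_bind[of UNIV]) (auto simp: e1 fin set_bind_pmf intro!: finite_UN_I)
  also have "\<dots> = (\<Sum>q0\<in>UNIV. pmf sel q0 * Q q + (if q0 = q then pmf sel q * (V - Q q) else 0))"
    by (intro sum.cong) (auto simp: algebra_simps)
  also have "\<dots> = Q q + pmf sel q * (V - Q q)"
    using sum_pmf_eq_1[of UNIV sel] by (simp add: sum.distrib sum_distrib_right[symmetric])
  finally show ?thesis by (simp add: V_def algebra_simps)
qed

lemma EQ_Suc:
  fixes p :: "'q::finite \<Rightarrow> 'q list pmf"
  assumes fin: "\<And>q. finite (set_pmf (p q))"
  shows "EQ p c lr sel Q0 (Suc i) q = EQ p c lr sel Q0 i q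
     + pmf sel q * lr i * (c q + Mop p q (EQ p c lr sel Q0 i) - EQ p c lr sel Q0 i q)"
proof -
  let ?M = "Qlaw p c lr sel Q0 i"
  have fM: "finite (set_pmf ?M)" by (rule fin_Qlaw[OF fin])
  note I = integrable_measure_pmf_finite[OF fM]
  have "EQ p c lr sel Q0 (Suc i) q = measure_pmf.expectation ?M
      (\<lambda>Q. Q q + pmf sel q * lr i * (c q + Mop p q Q - Q q))"
    unfolding EQ_def
    by (simp only: Qlaw.simps, subst pmf_expectation_bind[of "set_pmf ?M"])
       (auto simp: fM fin inner integral_measure_pmf[OF fM] set_bind_pmf intro!: finite_UN_I)
  also have "\<dots> = EQ p c lr sel Q0 i q
     + pmf sel q * lr i * (c q + Mop p q (EQ p c lr sel Q0 i) - EQ p c lr sel Q0 i q)"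
    unfolding EQ_def Mop_def
    by (simp add: I integral_sum integral_mult_right_zero algebra_simps)
  finally show ?thesis .
qed



lemma mono_F: "mono (bmc_F p c)"
  unfolding bmc_F_def
  by (intro monoI le_funI add_left_mono sum_mono mult_left_mono) (auto simp: le_fun_def)

lemma prod_bound:
  fixes a :: real and lr :: "nat \<Rightarrow> real"
  assumes "\<forall>i. 0 \<le> lr i \<and> lr i \<le> 1" "0 < a" "a \<le> 1"
    and "filterlim (\<lambda>n. \<Sum>i<n. lr i) at_top sequentially"
  shows "(\<lambda>n. \<Prod>k<n. (1 - a * lr k)) \<longlonglongrightarrow> 0"
proof (rule Lim_null_comparison)
  have le: "(\<Prod>k<n. (1 - a * lr k)) \<le> exp (- (a * (\<Sum>i<n. lr i)))" for n
  proof -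
    have "(\<Prod>k<n. (1 - a * lr k)) \<le> (\<Prod>k<n. exp (- (a * lr k)))"
      apply (rule prod_mono)
      using assms(1,3) exp_ge_add_one_self[of "- (a * lr _)"]
      by (auto intro!: mult_le_one simp: algebra_simps)
    also have "\<dots> = exp (- (a * (\<Sum>i<n. lr i)))"
      by (simp add: exp_sum[symmetric] sum_distrib_left sum_negf)
    finally show ?thesis .
  qed
  have nn: "0 \<le> (\<Prod>k<n. (1 - a * lr k))" for n
    using assms(1,3) by (auto intro!: prod_nonneg mult_le_one)
  show "\<forall>\<^sub>F n in sequentially. norm (\<Prod>k<n. (1 - a * lr k)) \<le> exp (- (a * (\<Sum>i<n. lr i)))"
    using le nn by auto
  have "filterlim (\<lambda>n. a * (\<Sum>i<n. lr i)) at_top sequentially"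
    by (rule filterlim_tendsto_pos_mult_at_top[OF tendsto_const assms(2) assms(4)])
  then have "filterlim (\<lambda>n. - (a * (\<Sum>i<n. lr i))) at_bot sequentially"
    by (simp add: filterlim_uminus_at_bot)
  then show "(\<lambda>n. exp (- (a * (\<Sum>i<n. lr i)))) \<longlonglongrightarrow> 0"
    by (rule filterlim_compose[OF exp_at_bot])
qed

lemma Mop_bound:
  assumes "\<And>q'. \<bar>y q'\<bar> \<le> t * x q'"
  shows "\<bar>Mop p q y\<bar> \<le> t * Mop p q x"
proof -
  have "\<bar>Mop p q y\<bar> \<le> (\<Sum>\<alpha>\<in>set_pmf (p q). \<bar>pmf (p q) \<alpha> * (\<Sum>j<length \<alpha>. y (\<alpha> ! j))\<bar>)"
    unfolding Mop_def by (rule sum_abs)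
  also have "\<dots> \<le> (\<Sum>\<alpha>\<in>set_pmf (p q). pmf (p q) \<alpha> * (\<Sum>j<length \<alpha>. t * x (\<alpha> ! j)))"
  proof (intro sum_mono)
    fix \<alpha>
    have "\<bar>(\<Sum>j<length \<alpha>. y (\<alpha> ! j))\<bar> \<le> (\<Sum>j<length \<alpha>. \<bar>y (\<alpha> ! j)\<bar>)" by (rule sum_abs)
    also have "\<dots> \<le> (\<Sum>j<length \<alpha>. t * x (\<alpha> ! j))" by (intro sum_mono assms)
    finally show "\<bar>pmf (p q) \<alpha> * (\<Sum>j<length \<alpha>. y (\<alpha> ! j))\<bar> \<le> pmf (p q) \<alpha> * (\<Sum>j<length \<alpha>. t * x (\<alpha> ! j))"
      by (simp add: abs_mult mult_left_mono)
  qed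
  also have "\<dots> = t * Mop p q x"
    unfolding Mop_def by (simp add: sum_distrib_left[symmetric] algebra_simps)
  finally show ?thesis .
qed

lemma Mop_lin: "Mop p q (\<lambda>q'. f q' - g q') = Mop p q f - Mop p q g"
  unfolding Mop_def by (simp add: sum_subtractf algebra_simps sum_distrib_left[symmetric] flip: sum_diff_distrib)



theorem lemma4:
  fixes p :: "'q::finite \<Rightarrow> 'q list pmf" and c :: "'q \<Rightarrow> real"
    and lr :: "nat \<Rightarrow> real" and sel :: "'q pmf" and pmin \<kappa> :: real
  assumes "is_BMC p c"
    and "\<forall>q. cstar p c q < \<infinity>"
    and "\<forall>i. 0 \<le> lr i \<and> lr i \<le> 1"
    and "filterlim (\<lambda>n. \<Sum>i<n. lr i) at_top sequentially"
    and "pmin > 0" and "\<forall>q. pmf sel q \<ge> pmin"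
    and "\<kappa> \<ge> 0"
  shows "\<forall>q. (\<lambda>i. EQ p c lr sel (\<lambda>q'. \<kappa> * enn2real (cstar p c q')) i q)
              \<longlonglongrightarrow> enn2real (cstar p c q)"
proof -
  have fin: "\<And>q. finite (set_pmf (p q))" and cpos: "\<And>q. c q > 0"
    using assms(1) by (auto simp: is_BMC_def)
  define x where "x q = enn2real (cstar p c q)" for q
  have cx: "cstar p c q = ennreal (x q)" for q
    using assms(2) by (simp add: x_def ennreal_enn2real_if less_top)
  have x0: "x q \<ge> 0" for q by (simp add: x_def)
  have Mnn: "Mop p q x \<ge> 0" for q
    unfolding Mop_def using x0 by (auto intro!: sum_nonneg mult_nonneg_nonneg)
  have fixp: "x q = c q + Mop p q x" for q
  proof -
    have "cstar p c = bmc_F p c (cstar p c)"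
      unfolding cstar_def by (rule lfp_unfold[OF mono_F])
    then have "ennreal (x q) = bmc_F p c (cstar p c) q" by (metis cx)
    also have "\<dots> = ennreal (c q + Mop p q x)"
    proof -
      have s1: "(\<Sum>i<length \<alpha>. ennreal (x (\<alpha> ! i))) = ennreal (\<Sum>i<length \<alpha>. x (\<alpha> ! i))" for \<alpha>
        by (rule sum_ennreal) (simp add: x0)
      have s2: "ennreal (pmf (p q) \<alpha>) * ennreal (\<Sum>i<length \<alpha>. x (\<alpha> ! i))
          = ennreal (pmf (p q) \<alpha> * (\<Sum>i<length \<alpha>. x (\<alpha> ! i)))" for \<alpha>
        by (rule ennreal_mult'[symmetric]) simp
      have s3: "(\<Sum>\<alpha>\<in>set_pmf (p q). ennreal (pmf (p q) \<alpha> * (\<Sum>i<length \<alpha>. x (\<alpha> ! i))))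
          = ennreal (Mop p q x)"
        unfolding Mop_def by (rule sum_ennreal) (simp add: x0 sum_nonneg)
      have "bmc_F p c (cstar p c) q = ennreal (c q) + ennreal (Mop p q x)"
        unfolding bmc_F_def cx s1 s2 s3 by (rule refl)
      also have "\<dots> = ennreal (c q + Mop p q x)"
        using cpos[of q] Mnn[of q] by simp
      finally show ?thesis .
    qed
    finally have "ennreal (x q) = ennreal (c q + Mop p q x)" .
    then show ?thesis using x0[of q] cpos[of q] Mnn[of q] by (subst (asm) ennreal_inj) auto
  qed
  have xpos: "x q > 0" for q using fixp[of q] cpos[of q] Mnn[of q] by linarith
  define \<delta> where "\<delta> = Min (range (\<lambda>q. c q / x q))"
  have \<delta>pos: "\<delta> > 0" unfolding \<delta>_def using cpos xpos by (auto intro: divide_pos_pos)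
  have \<delta>le: "\<delta> \<le> c q / x q" for q unfolding \<delta>_def by auto
  have \<delta>le1: "\<delta> \<le> 1"
  proof -
    obtain q :: 'q where True by simp
    have "c q / x q \<le> 1" using fixp[of q] Mnn[of q] xpos[of q] by (simp add: divide_le_eq_1)
    then show ?thesis using \<delta>le[of q] by linarith
  qed
  have Mx: "Mop p q x \<le> (1 - \<delta>) * x q" for q
  proof -
    have "\<delta> * x q \<le> c q" using \<delta>le[of q] xpos[of q] by (simp add: pos_le_divide_eq)
    then show ?thesis using fixp[of q] by (simp add: algebra_simps)
  qed
  obtain q1 :: 'q where True by simp
  have pmin1: "pmin \<le> 1" using assms(6) pmf_le_1[of sel q1] by (meson order_trans)
  define a where "a = pmin * \<delta>"
  have a0: "0 < a" and a1: "a \<le> 1"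
    using assms(5) \<delta>pos \<delta>le1 pmin1 by (auto simp: a_def intro: mult_le_one)
  define T where "T i = \<bar>\<kappa> - 1\<bar> * (\<Prod>k<i. (1 - a * lr k))" for i
  define E where "E = EQ p c lr sel (\<lambda>q'. \<kappa> * enn2real (cstar p c q'))"
  have bound: "\<forall>q. \<bar>E i q - x q\<bar> \<le> T i * x q" for i
  proof (induction i)
    case 0
    show ?case
    proof
      fix q
      have "E 0 q - x q = (\<kappa> - 1) * x q" by (simp add: E_def EQ_def x_def[symmetric] algebra_simps)
      then show "\<bar>E 0 q - x q\<bar> \<le> T 0 * x q" using x0[of q] by (simp add: T_def abs_mult)
    qed
  next
    case (Suc i)
    have Tnn: "T i \<ge> 0" unfolding T_def using assms(3) a1
      by (auto intro!: prod_nonneg mult_nonneg_nonneg mult_le_one)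
    show ?case
    proof
      fix q
      define s where "s = pmf sel q * lr i"
      have s0: "0 \<le> s" and s1: "s \<le> 1" and sa: "a * lr i \<le> s * \<delta>"
        using assms(3,6) pmf_le_1[of sel q] \<delta>pos
        by (auto simp: s_def a_def intro!: mult_le_one mult_right_mono)
      define e where "e q' = E i q' - x q'" for q'
      have eq: "E (Suc i) q - x q = (1 - s) * e q + s * Mop p q e"
      proof -
        have h: "Mop p q x = x q - c q" using fixp[of q] by simp
        show ?thesis unfolding E_def EQ_Suc[OF fin] e_def Mop_lin h
          by (simp add: s_def E_def algebra_simps)
      qed
      have "\<bar>E (Suc i) q - x q\<bar> \<le> (1 - s) * \<bar>e q\<bar> + s * \<bar>Mop p q e\<bar>"
        unfolding eq using s0 s1 by (simp add: abs_mult abs_triangle_ineq[THEN order_trans])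
      also have "\<dots> \<le> (1 - s) * (T i * x q) + s * (T i * Mop p q x)"
        using Suc.IH Mop_bound[of e "T i" x p q] s0 s1
        by (intro add_mono mult_left_mono) (auto simp: e_def)
      also have "\<dots> \<le> (1 - s) * (T i * x q) + s * (T i * ((1 - \<delta>) * x q))"
        using Mx[of q] Tnn s0 s1 by (intro add_mono mult_left_mono) auto
      also have "\<dots> = T i * x q * (1 - s * \<delta>)" by (simp add: algebra_simps)
      also have "\<dots> \<le> T i * x q * (1 - a * lr i)"
        using sa Tnn x0[of q] by (intro mult_left_mono) auto
      also have "\<dots> = T (Suc i) * x q" by (simp add: T_def algebra_simps)
      finally show "\<bar>E (Suc i) q - x q\<bar> \<le> T (Suc i) * x q" .
    qed
  qed
  have T0: "T \<longlonglongrightarrow> 0"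
    unfolding T_def using prod_bound[OF assms(3) a0 a1 assms(4)]
    by (intro tendsto_mult_right_zero)
  show ?thesis
  proof
    fix q
    have "(\<lambda>i. E i q - x q) \<longlonglongrightarrow> 0"
    proof (rule Lim_null_comparison)
      show "\<forall>\<^sub>F i in sequentially. norm (E i q - x q) \<le> T i * x q" using bound by auto
      show "(\<lambda>i. T i * x q) \<longlonglongrightarrow> 0" using T0 by (intro tendsto_mult_left_zero)
    qed
    then have "(\<lambda>i. E i q - x q + x q) \<longlonglongrightarrow> 0 + x q" by (intro tendsto_add) auto
    then show "(\<lambda>i. EQ p c lr sel (\<lambda>q'. \<kappa> * enn2real (cstar p c q')) i q) \<longlonglongrightarrow> enn2real (cstar p c q)"
      by (simp add: E_def x_def)
  qed
qed


end
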